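(* Let $A=[a_{ij}]\in N_n$ and let $(i,j)$ with $a_{ij}\neq0$. If there exist $\lambda\in\mathbb F$ and $1\le p<q\le n$ such that the $(i,j)$ entry of $\mathcal O_{p,q}^\lambda(A)$ is $0$, then one of the following holds: (1) there is $p'$ with $i<p'<j$ and $a_{ip'}\neq0$; in this case $\mathcal O_{p',j}^{\mu}(A)$ with $\mu=a_{ij}/a_{ip'}$ has $(i,j)$ entry $0$; (2) there is $q'$ with $i<q'<j$ and $a_{q'j}\neq0$; in this case $\mathcal O_{i,q'}^{\mu}(A)$ with $\mu=-a_{ij}/a_{q'j}$ has $(i,j)$ entry $0$.
   Context: $\mathbb F$ is a field; $N_n$ is the set of strictly upper triangular $n\times n$ matrices over $\mathbb F$; $E_{pq}$ is the matrix unit. For $\lambda\in\mathbb F$ and $1\le p<q\le n$, the elementary $U_n$-similarity operation is $\mathcal O_{p,q}^\lambda(X)=(I_n+\lambda E_{pq})X(I_n+\lambda E_{pq})^{-1}$ for $X\in N_n$. (In graph language: the arc $(i,j)$ of the graph of $A$, whose arcs are the positions of nonzero entries, can be eliminated by such an operation only in the two cases listed.) *)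

theory Defs
  imports "Jordan_Normal_Form.Matrix"
begin

text \<open>Indices are 0-based (Jordan_Normal_Form convention): entry (i,j) with i,j < n.\<close>

definition mat_unit :: "nat \<Rightarrow> nat \<Rightarrow> nat \<Rightarrow> 'a::field mat" where
  "mat_unit n p q = mat n n (\<lambda>(i,j). if i = p \<and> j = q then 1 else 0)"

definition strict_upper :: "nat \<Rightarrow> 'a::field mat set" where
  "strict_upper n = {A. A \<in> carrier_mat n n \<and> (\<forall>i<n. \<forall>j<n. j \<le> i \<longrightarrow> A $$ (i,j) = 0)}"

definition mat_inv :: "nat \<Rightarrow> 'a::field mat \<Rightarrow> 'a mat" where
  "mat_inv n P = (THE B. B \<in> carrier_mat n n \<and> P * B = 1\<^sub>m n \<and> B * P = 1\<^sub>m n)"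

definition elem_op :: "nat \<Rightarrow> nat \<Rightarrow> nat \<Rightarrow> 'a::field \<Rightarrow> 'a mat \<Rightarrow> 'a mat" where
  "elem_op n p q c X =
     (1\<^sub>m n + c \<cdot>\<^sub>m mat_unit n p q) * X * mat_inv n (1\<^sub>m n + c \<cdot>\<^sub>m mat_unit n p q)"

end

theory Submission
  imports Defs
begin

lemma multL:
  fixes M X :: "'a::field mat"
  assumes M: "M \<in> carrier_mat n n" and X: "X \<in> carrier_mat n n" and q: "q < n"
    and Me: "\<And>a b. a < n \<Longrightarrow> b < n \<Longrightarrow> M $$ (a,b) = (if a = b then 1 else 0) + (if a = p \<and> b = q then d else 0)"
    and i: "i < n" and j: "j < n"
  shows "(M * X) $$ (i,j) = X $$ (i,j) + (if i = p then d * X $$ (q,j) else 0)"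
proof -
  have "(M * X) $$ (i,j) = (\<Sum>k\<in>{0..<n}. M $$ (i,k) * X $$ (k,j))"
    using M X i j by (simp add: index_mult_mat scalar_prod_def)
  also have "\<dots> = (\<Sum>k\<in>{0..<n}. (if k = i then X $$ (k,j) else 0) + (if i = p \<and> k = q then d * X $$ (k,j) else 0))"
    by (rule sum.cong) (auto simp: Me i distrib_right)
  also have "\<dots> = X $$ (i,j) + (if i = p then d * X $$ (q,j) else 0)"
    by (simp add: sum.distrib i q)
  finally show ?thesis .
qed

lemma multR:
  fixes M X :: "'a::field mat"
  assumes M: "M \<in> carrier_mat n n" and X: "X \<in> carrier_mat n n" and p: "p < n"
    and Me: "\<And>a b. a < n \<Longrightarrow> b < n \<Longrightarrow> M $$ (a,b) = (if a = b then 1 else 0) + (if a = p \<and> b = q then d else 0)"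
    and i: "i < n" and j: "j < n"
  shows "(X * M) $$ (i,j) = X $$ (i,j) + (if j = q then d * X $$ (i,p) else 0)"
proof -
  have "(X * M) $$ (i,j) = (\<Sum>k\<in>{0..<n}. X $$ (i,k) * M $$ (k,j))"
    using M X i j by (simp add: index_mult_mat scalar_prod_def)
  also have "\<dots> = (\<Sum>k\<in>{0..<n}. (if k = j then X $$ (i,k) else 0) + (if k = p \<and> j = q then d * X $$ (i,k) else 0))"
    by (rule sum.cong) (auto simp: Me j distrib_left mult.commute)
  also have "\<dots> = X $$ (i,j) + (if j = q then d * X $$ (i,p) else 0)"
    by (simp add: sum.distrib j p)
  finally show ?thesis .
qed

lemma Pe:
  assumes "a < n" "b < n"
  shows "(1\<^sub>m n + c \<cdot>\<^sub>m mat_unit n p q) $$ (a,b) = (if a = b then 1 else 0) + (if a = p \<and> b = q then (c::'a::field) else 0)"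
  using assms by (simp add: mat_unit_def)

lemma Pcar: "(1\<^sub>m n + c \<cdot>\<^sub>m mat_unit n p q) \<in> carrier_mat n n"
  by (simp add: mat_unit_def)

lemma inv_eq:
  fixes P B :: "'a::field mat"
  assumes "B \<in> carrier_mat n n" "P \<in> carrier_mat n n" "P * B = 1\<^sub>m n" "B * P = 1\<^sub>m n"
  shows "mat_inv n P = B"
  unfolding mat_inv_def
proof (rule the_equality)
  show "B \<in> carrier_mat n n \<and> P * B = 1\<^sub>m n \<and> B * P = 1\<^sub>m n" using assms by simp
  fix B' assume h: "B' \<in> carrier_mat n n \<and> P * B' = 1\<^sub>m n \<and> B' * P = 1\<^sub>m n"
  have "B' = B' * (P * B)" using assms h by (metis right_mult_one_mat)
  also have "\<dots> = (B' * P) * B" using assms h by (metis assoc_mult_mat)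
  also have "\<dots> = B" using assms h by (metis left_mult_one_mat)
  finally show "B' = B" .
qed

lemma elem_inv:
  assumes "p < n" "q < n" "p \<noteq> q"
  shows "mat_inv n (1\<^sub>m n + c \<cdot>\<^sub>m mat_unit n p q) = (1\<^sub>m n + (-c) \<cdot>\<^sub>m mat_unit n p q :: 'a::field mat)"
proof (rule inv_eq[OF Pcar Pcar])
  show "(1\<^sub>m n + c \<cdot>\<^sub>m mat_unit n p q) * (1\<^sub>m n + (-c) \<cdot>\<^sub>m mat_unit n p q) = (1\<^sub>m n :: 'a mat)"
  proof (rule eq_matI)
    fix a b assume ab: "a < dim_row (1\<^sub>m n :: 'a mat)" "b < dim_col (1\<^sub>m n :: 'a mat)"
    then show "((1\<^sub>m n + c \<cdot>\<^sub>m mat_unit n p q) * (1\<^sub>m n + (-c) \<cdot>\<^sub>m mat_unit n p q)) $$ (a,b) = (1\<^sub>m n :: 'a mat) $$ (a,b)"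
      using assms by (subst multL[OF Pcar Pcar _ Pe]) (auto simp: Pe)
  qed (auto simp: mat_unit_def)
  show "(1\<^sub>m n + (-c) \<cdot>\<^sub>m mat_unit n p q) * (1\<^sub>m n + c \<cdot>\<^sub>m mat_unit n p q) = (1\<^sub>m n :: 'a mat)"
  proof (rule eq_matI)
    fix a b assume ab: "a < dim_row (1\<^sub>m n :: 'a mat)" "b < dim_col (1\<^sub>m n :: 'a mat)"
    then show "((1\<^sub>m n + (-c) \<cdot>\<^sub>m mat_unit n p q) * (1\<^sub>m n + c \<cdot>\<^sub>m mat_unit n p q)) $$ (a,b) = (1\<^sub>m n :: 'a mat) $$ (a,b)"
      using assms by (subst multL[OF Pcar Pcar _ Pe]) (auto simp: Pe)
  qed (auto simp: mat_unit_def)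
qed

lemma elem_entry:
  fixes A :: "'a::field mat"
  assumes A: "A \<in> strict_upper n" and pq: "p < q" "q < n" and i: "i < n" and j: "j < n"
  shows "elem_op n p q c A $$ (i,j) = A $$ (i,j) + (if i = p then c * A $$ (q,j) else 0)
           - (if j = q then c * A $$ (i,p) else 0)"
proof -
  have Ac: "A \<in> carrier_mat n n" and Az: "A $$ (q,p) = 0" using A pq by (auto simp: strict_upper_def)
  have MA: "(1\<^sub>m n + c \<cdot>\<^sub>m mat_unit n p q) * A \<in> carrier_mat n n" using Ac Pcar by (metis mult_carrier_mat)
  have "elem_op n p q c A $$ (i,j) = ((1\<^sub>m n + c \<cdot>\<^sub>m mat_unit n p q) * A * (1\<^sub>m n + (-c) \<cdot>\<^sub>m mat_unit n p q)) $$ (i,j)"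
    unfolding elem_op_def using pq by (simp add: elem_inv)
  also have "\<dots> = ((1\<^sub>m n + c \<cdot>\<^sub>m mat_unit n p q) * A) $$ (i,j) + (if j = q then (-c) * ((1\<^sub>m n + c \<cdot>\<^sub>m mat_unit n p q) * A) $$ (i,p) else 0)"
    using pq i j by (intro multR[OF Pcar MA _ Pe]) auto
  also have "\<dots> = A $$ (i,j) + (if i = p then c * A $$ (q,j) else 0)
           - (if j = q then c * A $$ (i,p) else 0)"
    using pq i j Az by (simp add: multL[OF Pcar Ac _ Pe])
  finally show ?thesis .
qed

theorem lemma3p4:
  fixes A :: "'a::field mat" and n i j :: nat
  assumes "A \<in> strict_upper n" and "i < n" and "j < n" and "A $$ (i,j) \<noteq> 0"
    and "\<exists>c p q. p < q \<and> q < n \<and> elem_op n p q c A $$ (i,j) = 0"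
  shows "(\<exists>p'. i < p' \<and> p' < j \<and> A $$ (i,p') \<noteq> 0 \<and>
            elem_op n p' j (A $$ (i,j) / A $$ (i,p')) A $$ (i,j) = 0)
       \<or> (\<exists>q'. i < q' \<and> q' < j \<and> A $$ (q',j) \<noteq> 0 \<and>
            elem_op n i q' (- A $$ (i,j) / A $$ (q',j)) A $$ (i,j) = 0)"
proof -
  have up: "\<And>a b. a < n \<Longrightarrow> b < n \<Longrightarrow> b \<le> a \<Longrightarrow> A $$ (a,b) = 0"
    using assms(1) by (auto simp: strict_upper_def)
  have ij: "i < j" using up assms(2,3,4) by (meson not_le)
  obtain c p q where pq: "p < q" "q < n" and z: "elem_op n p q c A $$ (i,j) = 0" using assms(5) by blast
  note e = elem_entry[OF assms(1) pq assms(2,3), of c]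
  show ?thesis
  proof (cases "i = p")
    case True
    then have jq: "j \<noteq> q" using z e up[of i i] up[of j j] assms by auto
    then have h: "A $$ (i,j) + c * A $$ (q,j) = 0" using z e True by simp
    then have nz: "A $$ (q,j) \<noteq> 0" using assms(4) by auto
    have "q < j" using nz up[of q j] pq assms(3) jq by (meson linorder_neqE_nat less_imp_le)
    moreover have "elem_op n i q (- A $$ (i,j) / A $$ (q,j)) A $$ (i,j) = 0"
      using elem_entry[OF assms(1) _ pq(2) assms(2,3)] pq True jq nz by simp
    ultimately show ?thesis using True pq nz by blast
  next
    case False
    then have jq: "j = q" using z e assms(4) by (auto split: if_splits)
    then have h: "A $$ (i,j) - c * A $$ (i,p) = 0" using z e False by simp
    then have nz: "A $$ (i,p) \<noteq> 0" using assms(4) by auto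
    have "i < p" using nz up[of i p] pq assms(2) False by (meson linorder_neqE_nat less_imp_le less_trans)
    moreover have "elem_op n p j (A $$ (i,j) / A $$ (i,p)) A $$ (i,j) = 0"
      using elem_entry[OF assms(1) _ _ assms(2,3)] pq False jq nz by simp
    ultimately show ?thesis using jq pq nz by blast
  qed
qed
end
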